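(* Let $n\ge 2$ and let $\sigma,\delta,\tau\in\mathbb{C}$ with $\sigma\tau\neq 0$. Let $T=(n;\sigma,\delta,\tau)$ and let $\lambda_h=\delta+2\sqrt{\sigma\tau}\cos\frac{h\pi}{n+1}$, $h=1,\dots,n$, be its eigenvalues. Then \[ \min_{\lambda_j\neq\lambda_h}|\lambda_h-\lambda_j|= \begin{cases} 4\sqrt{|\sigma\tau|}\,\sin\frac{\pi}{2(n+1)}\sin\frac{(2h-1)\pi}{2(n+1)}, & \text{for } 1<h\le \frac n2 \text{ or } h=n,\\[1mm] 4\sqrt{|\sigma\tau|}\,\sin\frac{\pi}{2(n+1)}\sin\frac{(2h+1)\pi}{2(n+1)}, & \text{for } h=1 \text{ or } \frac n2<h<n. \end{cases} \] In particular, the distance of $\lambda_h$ to the other eigenvalues of $T$ depends only on $h$, $n$ and $|\sigma\tau|$. Moreover, the minimal distance between any two distinct eigenvalues of $T$ equals $4\sqrt{|\sigma\tau|}\sin\frac{\pi}{2(n+1)}\sin\frac{3\pi}{2(n+1)}$, and it is achieved by $|\lambda_1-\lambda_2|$ and by $|\lambda_{n-1}-\lambda_n|$.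
   Context: For $\sigma,\delta,\tau\in\mathbb{C}$, $T=(n;\sigma,\delta,\tau)$ denotes the $n\times n$ tridiagonal Toeplitz matrix with all diagonal entries equal to $\delta$, all superdiagonal entries equal to $\tau$ and all subdiagonal entries equal to $\sigma$. For $\sigma\tau\ne0$ its eigenvalues are $\lambda_h=\delta+2\sqrt{\sigma\tau}\cos\frac{h\pi}{n+1}$, $h=1,\dots,n$, for a fixed choice of the square root; they are simple. *)

theory Defs
  imports Complex_Main
begin

text \<open>Eigenvalue lambda_h of T = (n; sigma, delta, tau), given a fixed square root s of sigma*tau.\<close>
definition tt_eig :: "nat \<Rightarrow> complex \<Rightarrow> complex \<Rightarrow> nat \<Rightarrow> complex" where
  "tt_eig n \<delta> s h = \<delta> + 2 * s * complex_of_real (cos (real h * pi / (real n + 1)))"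

end

theory Submission
  imports Defs
begin

definition C :: "nat \<Rightarrow> nat \<Rightarrow> real" where
  "C n h = cos (real h * pi / (real n + 1))"

lemma C_mono_le: "j \<le> h \<Longrightarrow> h \<le> n + 1 \<Longrightarrow> C n h \<le> C n j"
  unfolding C_def
proof (rule cos_monotone_0_pi_le)
  assume "j \<le> h" "h \<le> n+1"
  show "0 \<le> real j * pi / (real n + 1)" by simp
  show "real j * pi / (real n + 1) \<le> real h * pi / (real n + 1)"
    using \<open>j \<le> h\<close> by (simp add: divide_right_mono)
  have "real h \<le> real n + 1" using \<open>h \<le> n+1\<close> by simp
  then have "real h * pi \<le> (real n + 1) * pi" by (simp add: mult_right_mono)
  then show "real h * pi / (real n + 1) \<le> pi" by (simp add: field_simps)
qed

lemma C_mono_less: "j < h \<Longrightarrow> h \<le> n + 1 \<Longrightarrow> C n h < C n j"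
  unfolding C_def
proof (rule cos_monotone_0_pi)
  assume "j < h" "h \<le> n+1"
  show "0 \<le> real j * pi / (real n + 1)" by simp
  show "real j * pi / (real n + 1) < real h * pi / (real n + 1)"
    using \<open>j < h\<close> by (simp add: divide_strict_right_mono)
  have "real h \<le> real n + 1" using \<open>h \<le> n+1\<close> by simp
  then have "real h * pi \<le> (real n + 1) * pi" by (simp add: mult_right_mono)
  then show "real h * pi / (real n + 1) \<le> pi" by (simp add: field_simps)
qed

lemma eig_cmod: "cmod (tt_eig n \<delta> s h - tt_eig n \<delta> s j) = 2 * cmod s * \<bar>C n h - C n j\<bar>"
proof -
  have "tt_eig n \<delta> s h - tt_eig n \<delta> s j = 2 * s * complex_of_real (C n h - C n j)"
    unfolding tt_eig_def C_def by (simp add: algebra_simps)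
  then show ?thesis by (simp add: norm_mult del: of_real_diff)
qed

lemma arith1: "(N::real) > 0 \<Longrightarrow> ((x - 1) * pi / N + x * pi / N) / 2 = (2 * x - 1) * pi / (2 * N)"
  by (simp add: field_simps)
lemma arith2: "(N::real) > 0 \<Longrightarrow> (x * pi / N - (x - 1) * pi / N) / 2 = pi / (2 * N)"
  by (simp add: field_simps)
lemma arith3: "(N::real) > 0 \<Longrightarrow> (x - 1) * pi / N = x * pi / N - pi / N"
  by (simp add: field_simps)
lemma arith4: "(N::real) > 0 \<Longrightarrow> (x + 1) * pi / N = x * pi / N + pi / N"
  by (simp add: field_simps)

lemma gap: "1 \<le> h \<Longrightarrow> C n (h - 1) - C n h
   = 2 * sin (pi / (2 * (real n + 1))) * sin ((2 * real h - 1) * pi / (2 * (real n + 1)))"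
proof -
  assume h: "1 \<le> h"
  have r: "real (h-1) = real h - 1" using h by simp
  have a: "(real (h - 1) * pi / (real n + 1) + real h * pi / (real n + 1)) / 2
     = (2 * real h - 1) * pi / (2 * (real n + 1))" unfolding r by (rule arith1) simp
  have b: "(real h * pi / (real n + 1) - real (h - 1) * pi / (real n + 1)) / 2
     = pi / (2 * (real n + 1))" unfolding r by (rule arith2) simp
  show ?thesis unfolding C_def cos_diff_cos a b by simp
qed

lemma gap_cmp: "1 \<le> h \<Longrightarrow> (C n (h - 1) - C n h) - (C n h - C n (h + 1))
   = - 2 * C n h * (1 - cos (pi / (real n + 1)))"
proof -
  assume "1 \<le> h"
  let ?t = "pi / (real n + 1)" let ?a = "real h * pi / (real n + 1)"
  have e1: "real (h - 1) * pi / (real n + 1) = ?a - ?t" unfolding of_nat_diff[OF \<open>1 \<le> h\<close>] of_nat_1 by (rule arith3) simp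
  have e2: "real (h + 1) * pi / (real n + 1) = ?a + ?t"
    unfolding of_nat_add of_nat_1 by (rule arith4) simp
  show ?thesis unfolding C_def e1 e2 cos_add cos_diff by (simp add: algebra_simps)
qed

lemma L1: "j < h \<Longrightarrow> h \<le> n + 1 \<Longrightarrow> C n (h - 1) - C n h \<le> \<bar>C n h - C n j\<bar>"
  using C_mono_le[of j "h - 1" n] C_mono_less[of j h n] by auto

lemma L2: "h < j \<Longrightarrow> j \<le> n + 1 \<Longrightarrow> C n h - C n (h + 1) \<le> \<bar>C n h - C n j\<bar>"
  using C_mono_le[of "h + 1" j n] C_mono_less[of h j n] by auto

lemma C_nonneg: "2 * h \<le> n + 1 \<Longrightarrow> 0 \<le> C n h"
  unfolding C_def
proof (rule cos_ge_zero)
  assume "2 * h \<le> n + 1"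
  then have "2 * real h \<le> real n + 1" by linarith
  then have "real h * pi * 2 \<le> (real n + 1) * pi" by (simp add: mult_right_mono mult.commute mult.left_commute)
  then show "real h * pi / (real n + 1) \<le> pi / 2" by (simp add: field_simps)
  show "- (pi / 2) \<le> real h * pi / (real n + 1)"
    by (rule order_trans[of _ 0]) auto
qed

lemma C_nonpos: "n + 1 \<le> 2 * h \<Longrightarrow> h \<le> n + 1 \<Longrightarrow> C n h \<le> 0"
proof -
  assume a: "n + 1 \<le> 2 * h" "h \<le> n + 1"
  have "C n h = - C n (n + 1 - h)"
    unfolding C_def
  proof -
    have "real (n + 1 - h) * pi / (real n + 1) = pi - real h * pi / (real n + 1)"
      using a by (simp add: of_nat_diff field_simps)
    then show "cos (real h * pi / (real n + 1)) = - cos (real (n + 1 - h) * pi / (real n + 1))"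
      by simp
  qed
  moreover have "0 \<le> C n (n + 1 - h)" using a by (intro C_nonneg) auto
  ultimately show ?thesis by simp
qed

lemma cos_theta_lt1: "cos (pi / (real n + 1)) < 1"
proof -
  have "cos (pi / (real n + 1)) < cos 0"
    by (rule cos_monotone_0_pi) (auto simp: field_simps)
  then show ?thesis by simp
qed

lemma G_le_next: "1 \<le> h \<Longrightarrow> 2 * h \<le> n + 1 \<Longrightarrow> C n (h - 1) - C n h \<le> C n h - C n (h + 1)"
proof -
  assume a: "1 \<le> h" "2 * h \<le> n + 1"
  have "0 \<le> C n h * (1 - cos (pi / (real n + 1)))"
    using C_nonneg[OF a(2)] cos_theta_lt1[of n] by (intro mult_nonneg_nonneg) auto
  moreover have "(C n (h - 1) - C n h) - (C n h - C n (h + 1)) = - 2 * (C n h * (1 - cos (pi / (real n + 1))))"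
    using gap_cmp[OF a(1), of n] by simp
  ultimately show ?thesis by linarith
qed

lemma G_ge_next: "1 \<le> h \<Longrightarrow> n + 1 \<le> 2 * h \<Longrightarrow> h \<le> n + 1 \<Longrightarrow> C n h - C n (h + 1) \<le> C n (h - 1) - C n h"
proof -
  assume a: "1 \<le> h" "n + 1 \<le> 2 * h" "h \<le> n + 1"
  have "C n h * (1 - cos (pi / (real n + 1))) \<le> 0"
    using C_nonpos[OF a(2,3)] cos_theta_lt1[of n] by (intro mult_nonpos_nonneg) auto
  moreover have "(C n (h - 1) - C n h) - (C n h - C n (h + 1)) = - 2 * (C n h * (1 - cos (pi / (real n + 1))))"
    using gap_cmp[OF a(1), of n] by simp
  ultimately show ?thesis by linarith
qed

lemma sin_sym_bound: "0 \<le> a \<Longrightarrow> a \<le> x \<Longrightarrow> x \<le> pi - a \<Longrightarrow> sin a \<le> sin x"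
proof (cases "x \<le> pi / 2")
  case True
  assume "0 \<le> a" "a \<le> x"
  then show ?thesis using True by (intro sin_monotone_2pi_le) auto
next
  case False
  assume "0 \<le> a" "a \<le> x" "x \<le> pi - a"
  then have "sin a \<le> sin (pi - x)" using False by (intro sin_monotone_2pi_le) auto
  then show ?thesis by simp
qed

lemma G2_le: "2 \<le> h \<Longrightarrow> h \<le> n \<Longrightarrow> C n 1 - C n 2 \<le> C n (h - 1) - C n h"
proof -
  assume h: "2 \<le> h" "h \<le> n"
  define u where "u = pi / (2 * (real n + 1))"
  have u: "0 < u" unfolding u_def by simp
  have g2: "C n 1 - C n 2 = 2 * sin u * sin (3 * u)"
    using gap[of 2 n] unfolding u_def by simp
  have gh: "C n (h - 1) - C n h = 2 * sin u * sin ((2 * real h - 1) * u)"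
    using gap[of h n] h unfolding u_def by simp
  have pi_eq: "pi = 2 * (real n + 1) * u" unfolding u_def by simp
  have "3 * u \<le> (2 * real h - 1) * u" using h u by (intro mult_right_mono) auto
  moreover have "(2 * real h - 1) * u \<le> pi - 3 * u"
  proof -
    have A: "(2 * real h - 1) * u \<le> (2 * (real n + 1) - 3) * u" using h u by (intro mult_right_mono) auto
    have B: "(2 * (real n + 1) - 3) * u = pi - 3 * u" using pi_eq by (simp add: algebra_simps)
    show ?thesis using A B by linarith
  qed
  ultimately have "sin (3 * u) \<le> sin ((2 * real h - 1) * u)"
    using u by (intro sin_sym_bound) auto
  moreover have "0 \<le> sin u"
  proof (rule sin_ge_zero)
    have "1 * u \<le> (2 * real n + 2) * u" using u by (intro mult_right_mono) auto
    then show "u \<le> pi" using pi_eq by simp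
  qed (use u in auto)
  ultimately show ?thesis unfolding g2 gh by (simp add: mult_left_mono)
qed

lemma Gn_eq: "2 \<le> n \<Longrightarrow> C n (n - 1) - C n n = C n 1 - C n 2"
proof -
  assume n: "2 \<le> n"
  let ?u = "pi / (2 * (real n + 1))"
  have g2: "C n 1 - C n 2 = 2 * sin ?u * sin (3 * ?u)"
    using gap[of 2 n] by simp
  have gh: "C n (n - 1) - C n n = 2 * sin ?u * sin ((2 * real n - 1) * ?u)"
    using gap[of n n] n by simp
  have "(2 * real n - 1) * ?u = pi - 3 * ?u" by (simp add: field_simps)
  then show ?thesis unfolding g2 gh by simp
qed

theorem proposition1:
  fixes n :: nat and \<sigma> \<delta> \<tau> s :: complex
  assumes "n \<ge> 2" and "\<sigma> * \<tau> \<noteq> 0" and "s\<^sup>2 = \<sigma> * \<tau>"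
  shows "(\<forall>h\<in>{1..n}.
            Min {cmod (tt_eig n \<delta> s h - tt_eig n \<delta> s j) | j. j \<in> {1..n} \<and> tt_eig n \<delta> s j \<noteq> tt_eig n \<delta> s h}
          = (if (1 < h \<and> 2 * h \<le> n) \<or> h = n
             then 4 * sqrt (cmod (\<sigma> * \<tau>)) * sin (pi / (2 * (real n + 1)))
                    * sin ((2 * real h - 1) * pi / (2 * (real n + 1)))
             else 4 * sqrt (cmod (\<sigma> * \<tau>)) * sin (pi / (2 * (real n + 1)))
                    * sin ((2 * real h + 1) * pi / (2 * (real n + 1)))))
       \<and> Min {cmod (tt_eig n \<delta> s h - tt_eig n \<delta> s j) | h j. h \<in> {1..n} \<and> j \<in> {1..n}
                \<and> tt_eig n \<delta> s j \<noteq> tt_eig n \<delta> s h}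
          = 4 * sqrt (cmod (\<sigma> * \<tau>)) * sin (pi / (2 * (real n + 1))) * sin (3 * pi / (2 * (real n + 1)))
       \<and> cmod (tt_eig n \<delta> s 1 - tt_eig n \<delta> s 2)
          = 4 * sqrt (cmod (\<sigma> * \<tau>)) * sin (pi / (2 * (real n + 1))) * sin (3 * pi / (2 * (real n + 1)))
       \<and> cmod (tt_eig n \<delta> s (n - 1) - tt_eig n \<delta> s n)
          = 4 * sqrt (cmod (\<sigma> * \<tau>)) * sin (pi / (2 * (real n + 1))) * sin (3 * pi / (2 * (real n + 1)))"
  proof -
  have s0: "s \<noteq> 0" using assms(2,3) by auto
  have sq: "sqrt (cmod (\<sigma> * \<tau>)) = cmod s" using assms(3)[symmetric] by (simp add: norm_power)
  have sp: "0 < cmod s" using s0 by simp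
  have ne: "(tt_eig n \<delta> s j \<noteq> tt_eig n \<delta> s h) = (j \<noteq> h)" if hj: "h \<in> {1..n}" "j \<in> {1..n}" for h j
  proof
    assume "tt_eig n \<delta> s j \<noteq> tt_eig n \<delta> s h" then show "j \<noteq> h" by auto
  next
    assume "j \<noteq> h"
    then have "C n h \<noteq> C n j" using C_mono_less[of j h n] C_mono_less[of h j n] hj
      by (cases "j < h") auto
    then have "cmod (tt_eig n \<delta> s h - tt_eig n \<delta> s j) \<noteq> 0" using eig_cmod[of n \<delta> s h j] sp by simp
    then show "tt_eig n \<delta> s j \<noteq> tt_eig n \<delta> s h" by auto
  qed
  have Gpos: "0 < C n (h - 1) - C n h" if "1 \<le> h" "h \<le> n + 1" for h
    using C_mono_less[of "h - 1" h n] that by auto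
  have dl: "cmod (tt_eig n \<delta> s h - tt_eig n \<delta> s (h - 1)) = 2 * cmod s * (C n (h - 1) - C n h)"
    if "1 \<le> h" "h \<le> n + 1" for h
    using eig_cmod[of n \<delta> s h "h - 1"] Gpos[OF that] by simp
  have dr: "cmod (tt_eig n \<delta> s h - tt_eig n \<delta> s (h + 1)) = 2 * cmod s * (C n h - C n (h + 1))"
    if "h \<le> n" for h
    using eig_cmod[of n \<delta> s h "h + 1"] Gpos[of "h + 1"] that by simp
  have gapval: "2 * cmod s * (C n (h - 1) - C n h) = 4 * sqrt (cmod (\<sigma> * \<tau>)) * sin (pi / (2 * (real n + 1)))
                    * sin ((2 * real h - 1) * pi / (2 * (real n + 1)))" if "1 \<le> h" for h
    using gap[OF that, of n] sq by simp
  have gapval2: "2 * cmod s * (C n h - C n (h + 1)) = 4 * sqrt (cmod (\<sigma> * \<tau>)) * sin (pi / (2 * (real n + 1)))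
                    * sin ((2 * real h + 1) * pi / (2 * (real n + 1)))" for h
  proof -
    have "2 * real (h + 1) - 1 = 2 * real h + 1" by simp
    then show ?thesis using gapval[of "h + 1"] by (simp only: add_diff_cancel_right')
  qed
  have lb1: "2 * cmod s * (C n (h - 1) - C n h) \<le> cmod (tt_eig n \<delta> s h - tt_eig n \<delta> s j)"
    if "j < h" "h \<le> n + 1" for h j
    using L1[OF that] eig_cmod[of n \<delta> s h j] sp by simp
  have lb2: "2 * cmod s * (C n h - C n (h + 1)) \<le> cmod (tt_eig n \<delta> s h - tt_eig n \<delta> s j)"
    if "h < j" "j \<le> n + 1" for h j
    using L2[OF that] eig_cmod[of n \<delta> s h j] sp by simp
  have P1: "Min {cmod (tt_eig n \<delta> s h - tt_eig n \<delta> s j) | j. j \<in> {1..n} \<and> tt_eig n \<delta> s j \<noteq> tt_eig n \<delta> s h}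
          = (if (1 < h \<and> 2 * h \<le> n) \<or> h = n
             then 4 * sqrt (cmod (\<sigma> * \<tau>)) * sin (pi / (2 * (real n + 1)))
                    * sin ((2 * real h - 1) * pi / (2 * (real n + 1)))
             else 4 * sqrt (cmod (\<sigma> * \<tau>)) * sin (pi / (2 * (real n + 1)))
                    * sin ((2 * real h + 1) * pi / (2 * (real n + 1))))" if h: "h \<in> {1..n}" for h
  proof -
    let ?S = "{cmod (tt_eig n \<delta> s h - tt_eig n \<delta> s j) | j. j \<in> {1..n} \<and> tt_eig n \<delta> s j \<noteq> tt_eig n \<delta> s h}"
    have fin: "finite ?S"
      by (rule finite_subset[of _ "(\<lambda>j. cmod (tt_eig n \<delta> s h - tt_eig n \<delta> s j)) ` {1..n}"]) auto
    have S: "y \<in> ?S \<longleftrightarrow> (\<exists>j. y = cmod (tt_eig n \<delta> s h - tt_eig n \<delta> s j) \<and> j \<in> {1..n} \<and> j \<noteq> h)" for y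
      using ne[OF h] by blast
    show ?thesis
    proof (cases "(1 < h \<and> 2 * h \<le> n) \<or> h = n")
      case True
      then have h2: "2 \<le> h" using h assms(1) by auto
      have "Min ?S = 2 * cmod s * (C n (h - 1) - C n h)"
      proof (rule Min_eqI[OF fin])
        show "2 * cmod s * (C n (h - 1) - C n h) \<in> ?S"
          unfolding S using dl[of h] h h2 by (intro exI[of _ "h - 1"]) auto
      next
        fix y assume "y \<in> ?S"
        then obtain j where j: "y = cmod (tt_eig n \<delta> s h - tt_eig n \<delta> s j)" "j \<in> {1..n}" "j \<noteq> h"
          unfolding S by blast
        show "2 * cmod s * (C n (h - 1) - C n h) \<le> y"
        proof (cases "j < h")
          case True then show ?thesis using lb1[of j h] j h by auto
        next
          case False
          then have "h < j" "2 * h \<le> n + 1" using j \<open>(1 < h \<and> 2 * h \<le> n) \<or> h = n\<close> by auto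
          then have "2 * cmod s * (C n (h - 1) - C n h) \<le> 2 * cmod s * (C n h - C n (h + 1))"
            using G_le_next[of h n] h sp by (intro mult_left_mono) auto
          then show ?thesis using lb2[of h j] j \<open>h < j\<close> by auto
        qed
      qed
      then show ?thesis unfolding if_P[OF True] using gapval[of h] h2 by simp
    next
      case False
      then have hn: "h < n" using h by auto
      have "Min ?S = 2 * cmod s * (C n h - C n (h + 1))"
      proof (rule Min_eqI[OF fin])
        show "2 * cmod s * (C n h - C n (h + 1)) \<in> ?S"
          unfolding S using dr[of h] h hn by (intro exI[of _ "h + 1"]) auto
      next
        fix y assume "y \<in> ?S"
        then obtain j where j: "y = cmod (tt_eig n \<delta> s h - tt_eig n \<delta> s j)" "j \<in> {1..n}" "j \<noteq> h"
          unfolding S by blast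
        show "2 * cmod s * (C n h - C n (h + 1)) \<le> y"
        proof (cases "h < j")
          case True then show ?thesis using lb2[of h j] j by auto
        next
          case False
          then have "j < h" "n + 1 \<le> 2 * h" using j False \<open>\<not> ((1 < h \<and> 2 * h \<le> n) \<or> h = n)\<close> by auto
          then have "2 * cmod s * (C n h - C n (h + 1)) \<le> 2 * cmod s * (C n (h - 1) - C n h)"
            using G_ge_next[of h n] h sp by (intro mult_left_mono) auto
          then show ?thesis using lb1[of j h] j h \<open>j < h\<close> by auto
        qed
      qed
      then show ?thesis unfolding if_not_P[OF False] using gapval2[of h] by simp
    qed
  qed
  have v12: "cmod (tt_eig n \<delta> s 1 - tt_eig n \<delta> s 2) = 2 * cmod s * (C n 1 - C n 2)"
    using eig_cmod[of n \<delta> s 1 2] C_mono_less[of 1 2 n] assms(1) by simp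
  have val: "2 * cmod s * (C n 1 - C n 2) = 4 * sqrt (cmod (\<sigma> * \<tau>)) * sin (pi / (2 * (real n + 1))) * sin (3 * pi / (2 * (real n + 1)))"
    using gapval[of 2] by simp
  have P2: "Min {cmod (tt_eig n \<delta> s h - tt_eig n \<delta> s j) | h j. h \<in> {1..n} \<and> j \<in> {1..n}
                \<and> tt_eig n \<delta> s j \<noteq> tt_eig n \<delta> s h} = 2 * cmod s * (C n 1 - C n 2)"
  proof (rule Min_eqI)
    show "finite {cmod (tt_eig n \<delta> s h - tt_eig n \<delta> s j) | h j. h \<in> {1..n} \<and> j \<in> {1..n}
                \<and> tt_eig n \<delta> s j \<noteq> tt_eig n \<delta> s h}"
      by (rule finite_subset[of _ "(\<lambda>(h, j). cmod (tt_eig n \<delta> s h - tt_eig n \<delta> s j)) ` ({1..n} \<times> {1..n})"]) auto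
  next
    have "tt_eig n \<delta> s 2 \<noteq> tt_eig n \<delta> s 1" using ne[of 1 2] assms(1) by auto
    show "2 * cmod s * (C n 1 - C n 2) \<in> {cmod (tt_eig n \<delta> s h - tt_eig n \<delta> s j) | h j. h \<in> {1..n} \<and> j \<in> {1..n}
                \<and> tt_eig n \<delta> s j \<noteq> tt_eig n \<delta> s h}"
      unfolding mem_Collect_eq
      by (rule exI[of _ 1], rule exI[of _ 2]) (use v12 assms(1) \<open>tt_eig n \<delta> s 2 \<noteq> tt_eig n \<delta> s 1\<close> in auto)
  next
    fix y assume "y \<in> {cmod (tt_eig n \<delta> s h - tt_eig n \<delta> s j) | h j. h \<in> {1..n} \<and> j \<in> {1..n}
                \<and> tt_eig n \<delta> s j \<noteq> tt_eig n \<delta> s h}"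
    then obtain h j where hj: "y = cmod (tt_eig n \<delta> s h - tt_eig n \<delta> s j)" "h \<in> {1..n}" "j \<in> {1..n}" "j \<noteq> h"
      using ne by blast
    have sym: "cmod (tt_eig n \<delta> s h - tt_eig n \<delta> s j) = cmod (tt_eig n \<delta> s j - tt_eig n \<delta> s h)"
      by (rule norm_minus_commute)
    show "2 * cmod s * (C n 1 - C n 2) \<le> y"
    proof (cases "j < h")
      case True
      then have "2 * cmod s * (C n 1 - C n 2) \<le> 2 * cmod s * (C n (h - 1) - C n h)"
        using G2_le[of h n] hj sp by (intro mult_left_mono) auto
      then show ?thesis using lb1[of j h] hj True by auto
    next
      case False
      then have "h < j" using hj by auto
      then have "2 * cmod s * (C n 1 - C n 2) \<le> 2 * cmod s * (C n (j - 1) - C n j)"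
        using G2_le[of j n] hj sp by (intro mult_left_mono) auto
      then show ?thesis using lb1[of h j] hj \<open>h < j\<close> sym by auto
    qed
  qed
  have P4: "cmod (tt_eig n \<delta> s (n - 1) - tt_eig n \<delta> s n) = 2 * cmod s * (C n 1 - C n 2)"
  proof -
    have "cmod (tt_eig n \<delta> s (n - 1) - tt_eig n \<delta> s n) = cmod (tt_eig n \<delta> s n - tt_eig n \<delta> s (n - 1))"
      by (rule norm_minus_commute)
    also have "\<dots> = 2 * cmod s * (C n (n - 1) - C n n)" using dl[of n] assms(1) by simp
    also have "\<dots> = 2 * cmod s * (C n 1 - C n 2)" using Gn_eq[OF assms(1)] by simp
    finally show ?thesis .
  qed
  show ?thesis using P1 P2 P4 v12 val by simp
qed

end
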